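(* Let $\mathcal{P}=\{1,\dots,p\}$ and let $M(1),\dots,M(p)\in\mathbb{R}^{n\times n}$ be exponentially stable (Hurwitz) matrices. Let $\tau_D>0$, $N_0>0$ and $\lambda>0$. Then there exists $g_0>0$ such that for every $g\ge g_0$ there is a constant $c>0$ such that, for every switching signal $\sigma\in\mathcal{S}_{ave}(\tau_D,N_0)$ and every initial condition, the solution of $\dot x=gM(\sigma(t))x$ satisfies $\|x(t)\|\le c\,e^{-\lambda t}\|x(0)\|$ for all $t\ge0$.
   Context: A switching signal is a piecewise-constant, right-continuous map $\sigma:[0,\infty)\to\mathcal{P}$ with finitely many discontinuities on each bounded interval. For $t\ge t_0\ge0$, $N_\sigma(t_0,t)$ is the number of discontinuities of $\sigma$ in the open interval $(t_0,t)$, and $\mathcal{S}_{ave}(\tau_D,N_0)$ is the set of switching signals with $N_\sigma(t_0,t)\le N_0+\frac{t-t_0}{\tau_D}$ for all $t\ge t_0\ge0$. $\|\cdot\|$ is any vector norm (with induced matrix norm). *)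

theory Defs
  imports "HOL-Analysis.Analysis"
begin

definition hurwitz :: "real^'n^'n \<Rightarrow> bool" where
  "hurwitz A \<longleftrightarrow>
     (\<forall>(mu::complex) (v::complex^'n). v \<noteq> 0 \<and>
        (\<chi> i j. complex_of_real (A $ i $ j)) *v v = mu *s v \<longrightarrow> Re mu < 0)"

definition disc_points :: "(real \<Rightarrow> nat) \<Rightarrow> real set" where
  "disc_points \<sigma> = {t. 0 < t \<and> \<not> continuous (at t) \<sigma>}"

text \<open>Switching signal with values in P: right-continuous, piecewise constant
  (nat carries the discrete topology), finitely many discontinuities on bounded intervals.\<close>
definition switching_signal :: "nat set \<Rightarrow> (real \<Rightarrow> nat) \<Rightarrow> bool" where
  "switching_signal P \<sigma> \<longleftrightarrow>
     (\<forall>t\<ge>0. \<sigma> t \<in> P) \<and>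
     (\<forall>t\<ge>0. continuous (at_right t) \<sigma>) \<and>
     (\<forall>T. finite (disc_points \<sigma> \<inter> {0..T}))"

definition N_sigma :: "(real \<Rightarrow> nat) \<Rightarrow> real \<Rightarrow> real \<Rightarrow> nat" where
  "N_sigma \<sigma> t0 t = card (disc_points \<sigma> \<inter> {t0<..<t})"

definition S_ave :: "nat set \<Rightarrow> real \<Rightarrow> real \<Rightarrow> (real \<Rightarrow> nat) set" where
  "S_ave P tauD N0 = {\<sigma>. switching_signal P \<sigma> \<and>
     (\<forall>t0 t. 0 \<le> t0 \<and> t0 \<le> t \<longrightarrow> real (N_sigma \<sigma> t0 t) \<le> N0 + (t - t0) / tauD)}"

definition switched_solution ::
  "real \<Rightarrow> (nat \<Rightarrow> real^'n^'n) \<Rightarrow> (real \<Rightarrow> nat) \<Rightarrow> (real \<Rightarrow> real^'n) \<Rightarrow> bool" where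
  "switched_solution g M \<sigma> x \<longleftrightarrow>
     continuous_on {0..} x \<and>
     (\<forall>t\<ge>0. t \<notin> disc_points \<sigma> \<longrightarrow>
        (x has_vector_derivative (g *\<^sub>R (M (\<sigma> t) *v x t))) (at t within {0..}))"

end

theory Submission
  imports Defs "Jordan_Normal_Form.Spectral_Radius"
begin

no_notation Matrix.vec_index (infixl "$" 100)

lemma smult_pow_entry:
  fixes C :: "complex mat"
  assumes C: "C \<in> carrier_mat n n" and i: "i < n" and j: "j < n"
  shows "((a \<cdot>\<^sub>m C) ^\<^sub>m k) $$ (i,j) = a^k * (C ^\<^sub>m k) $$ (i,j)"
proof -
  have "(a \<cdot>\<^sub>m C) ^\<^sub>m k = a^k \<cdot>\<^sub>m (C ^\<^sub>m k)"
  proof (induction k)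
    case 0 thus ?case using C by (auto intro!: eq_matI)
  next
    case (Suc k)
    have "(a \<cdot>\<^sub>m C) ^\<^sub>m Suc k = (a^k \<cdot>\<^sub>m (C ^\<^sub>m k)) * (a \<cdot>\<^sub>m C)" using Suc by simp
    also have "\<dots> = a^k \<cdot>\<^sub>m ((C ^\<^sub>m k) * (a \<cdot>\<^sub>m C))"
      by (rule mult_smult_assoc_mat) (use C in auto)
    also have "\<dots> = a^k \<cdot>\<^sub>m (a \<cdot>\<^sub>m ((C ^\<^sub>m k) * C))"
      using mult_smult_distrib[of "C ^\<^sub>m k" n n C n a] C by simp
    also have "\<dots> = a^(Suc k) \<cdot>\<^sub>m (C ^\<^sub>m Suc k)"
      by (rule eq_matI) auto
    finally show ?case .
  qed
  thus ?thesis using C i j by simp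
qed

lemma jnf_decay:
  fixes A :: "complex mat"
  assumes A: "A \<in> carrier_mat n n" and n: "n > 0"
    and ev: "\<And>mu. eigenvalue A mu \<Longrightarrow> Re mu < 0"
  shows "\<exists>h>0. \<exists>r c. 0 < r \<and> r < 1 \<and>
     (\<forall>k i j. i < n \<longrightarrow> j < n \<longrightarrow>
        norm (((1\<^sub>m n + complex_of_real h \<cdot>\<^sub>m A) ^\<^sub>m k) $$ (i,j)) \<le> c * r^k)"
proof -
  define S where "S = spectrum A"
  have finS: "finite S" using card_finite_spectrum[OF A] S_def by auto
  define h where "h = Min (insert 1 ((\<lambda>mu. - Re mu / (cmod mu)^2) ` S))"
  have hpos: "h > 0"
  proof -
    have "\<forall>y\<in>insert 1 ((\<lambda>mu. - Re mu / (cmod mu)^2) ` S). y > 0"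
    proof
      fix y assume "y \<in> insert 1 ((\<lambda>mu. - Re mu / (cmod mu)^2) ` S)"
      then consider "y = 1" | mu where "mu \<in> S" "y = - Re mu / (cmod mu)^2" by auto
      thus "y > 0"
      proof cases
        case 2
        hence "Re mu < 0" using ev S_def spectrum_def by auto
        hence "mu \<noteq> 0" by auto
        hence "(cmod mu)^2 > 0" by simp
        thus ?thesis using 2 \<open>Re mu < 0\<close> by (simp add: divide_neg_pos)
      qed simp
    qed
    thus ?thesis unfolding h_def using finS by (subst Min_gr_iff) auto
  qed
  have hle: "h * (cmod mu)^2 \<le> - Re mu" if "eigenvalue A mu" for mu
  proof -
    have "mu \<in> S" using that S_def spectrum_def by auto
    hence "h \<le> - Re mu / (cmod mu)^2" unfolding h_def using finS by (intro Min_le) auto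
    moreover have "mu \<noteq> 0" using ev[OF that] by auto
    ultimately show ?thesis by (simp add: field_simps)
  qed
  define B where "B = 1\<^sub>m n + complex_of_real h \<cdot>\<^sub>m A"
  have B: "B \<in> carrier_mat n n" using A B_def by auto
  have evB: "cmod nu < 1" if e: "eigenvalue B nu" for nu
  proof -
    obtain v where v: "v \<in> carrier_vec n" "v \<noteq> 0\<^sub>v n" "B *\<^sub>v v = nu \<cdot>\<^sub>v v"
      using e B unfolding eigenvalue_def eigenvector_def by auto
    define mu where "mu = (nu - 1) / complex_of_real h"
    have "A *\<^sub>v v = mu \<cdot>\<^sub>v v"
    proof (rule eq_vecI)
      fix i assume "i < dim_vec (mu \<cdot>\<^sub>v v)"
      hence i: "i < n" using v by auto
      have "B *\<^sub>v v = 1\<^sub>m n *\<^sub>v v + (complex_of_real h \<cdot>\<^sub>m A) *\<^sub>v v"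
        unfolding B_def using A v by (intro add_mult_distrib_mat_vec) auto
      moreover have "vec_index ((complex_of_real h \<cdot>\<^sub>m A) *\<^sub>v v) i
          = complex_of_real h * vec_index (A *\<^sub>v v) i"
        using i A v by (simp add: scalar_prod_def sum_distrib_left mult.assoc)
      ultimately have "vec_index (B *\<^sub>v v) i = vec_index v i + complex_of_real h * vec_index (A *\<^sub>v v) i"
        using i A v by simp
      hence "nu * vec_index v i = vec_index v i + complex_of_real h * vec_index (A *\<^sub>v v) i"
        using v i by simp
      hence "vec_index (A *\<^sub>v v) i = mu * vec_index v i"
        unfolding mu_def using hpos by (simp add: field_simps)
      thus "vec_index (A *\<^sub>v v) i = vec_index (mu \<cdot>\<^sub>v v) i" using i v by simp
    qed (use A v in auto)
    hence emu: "eigenvalue A mu" unfolding eigenvalue_def eigenvector_def using A v by auto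
    have nu: "nu = 1 + complex_of_real h * mu" unfolding mu_def using hpos by simp
    have r: "Re mu < 0" using ev[OF emu] .
    have h2: "h * (Re mu ^2 + Im mu ^2) \<le> - Re mu" using hle[OF emu] by (simp add: cmod_power2)
    have "(cmod nu)^2 = (1 + h * Re mu)^2 + (h * Im mu)^2" unfolding nu by (simp add: cmod_power2)
    also have "\<dots> = 1 + h * Re mu + h * (Re mu + h * (Re mu ^2 + Im mu ^2))"
      by (simp add: power2_eq_square algebra_simps)
    also have "\<dots> \<le> 1 + h * Re mu"
    proof -
      have "h * (Re mu + h * (Re mu ^2 + Im mu ^2)) \<le> 0"
        using h2 hpos by (intro mult_nonneg_nonpos) linarith+
      thus ?thesis by linarith
    qed
    also have "\<dots> < 1" using hpos r by (simp add: mult_pos_neg)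
    finally have "(cmod nu)^2 < 1^2" by simp
    thus ?thesis by (rule power_less_imp_less_base) simp
  qed
  define rho where "rho = spectral_radius B"
  have rho: "rho < 1" "0 \<le> rho"
  proof -
    from spectral_radius_mem_max(1)[OF B n] obtain nu where "nu \<in> spectrum B" "rho = cmod nu"
      unfolding rho_def by auto
    thus "rho < 1" "0 \<le> rho" using evB unfolding spectrum_def by auto
  qed
  define r where "r = (1 + rho) / 2"
  have r: "0 < r" "r < 1" "rho < r" using rho unfolding r_def by auto
  define C where "C = complex_of_real (1/r) \<cdot>\<^sub>m B"
  have C: "C \<in> carrier_mat n n" using B C_def by auto
  have evC: "cmod nu < 1" if e: "eigenvalue C nu" for nu
  proof -
    obtain v where v: "v \<in> carrier_vec n" "v \<noteq> 0\<^sub>v n" "C *\<^sub>v v = nu \<cdot>\<^sub>v v"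
      using e C unfolding eigenvalue_def eigenvector_def by auto
    have "B *\<^sub>v v = (complex_of_real r * nu) \<cdot>\<^sub>v v"
    proof (rule eq_vecI)
      fix i assume "i < dim_vec ((complex_of_real r * nu) \<cdot>\<^sub>v v)"
      hence i: "i < n" using v by auto
      have "vec_index (C *\<^sub>v v) i = complex_of_real (1/r) * vec_index (B *\<^sub>v v) i"
        unfolding C_def using i B v by (simp add: scalar_prod_def sum_distrib_left mult.assoc)
      hence "nu * vec_index v i = complex_of_real (1/r) * vec_index (B *\<^sub>v v) i"
        using v i by simp
      hence "vec_index (B *\<^sub>v v) i = complex_of_real r * nu * vec_index v i"
        using r by (simp add: field_simps)
      thus "vec_index (B *\<^sub>v v) i = vec_index ((complex_of_real r * nu) \<cdot>\<^sub>v v) i"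
        using i v by simp
    qed (use B v in auto)
    hence "eigenvalue B (complex_of_real r * nu)"
      unfolding eigenvalue_def eigenvector_def using B v by auto
    hence "cmod (complex_of_real r * nu) \<le> rho"
      using spectral_radius_mem_max(2)[OF B n] unfolding rho_def spectrum_def by auto
    hence "r * cmod nu \<le> rho" using r by (simp add: norm_mult abs_of_pos)
    hence "r * cmod nu < r * 1" using r by linarith
    thus ?thesis using r by (meson mult_less_cancel_left_pos)
  qed
  have "spectral_radius C < 1"
  proof -
    from spectral_radius_mem_max(1)[OF C n] obtain nu where "nu \<in> spectrum C" "spectral_radius C = cmod nu"
      by auto
    thus ?thesis using evC unfolding spectrum_def by auto
  qed
  from spectral_radius_jnf_norm_bound_less_1_upper_triangular[OF C this]
  obtain c where c: "\<And>k. norm_bound (C ^\<^sub>m k) c" by auto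
  have BC: "B = complex_of_real r \<cdot>\<^sub>m C" unfolding C_def using r
    by (auto intro!: eq_matI simp: B)
  show ?thesis
  proof (intro exI conjI allI impI)
    show "h > 0" by fact
    show "0 < r" "r < 1" using r by auto
    fix k i j assume i: "i < n" and j: "j < n"
    have "((1\<^sub>m n + complex_of_real h \<cdot>\<^sub>m A) ^\<^sub>m k) $$ (i,j) = complex_of_real r ^ k * (C ^\<^sub>m k) $$ (i,j)"
      unfolding B_def[symmetric] BC by (rule smult_pow_entry[OF C i j])
    hence "norm (((1\<^sub>m n + complex_of_real h \<cdot>\<^sub>m A) ^\<^sub>m k) $$ (i,j)) = r^k * norm ((C ^\<^sub>m k) $$ (i,j))"
      using r by (simp add: norm_mult norm_power)
    also have "\<dots> \<le> r^k * c" using c[of k] i j C r unfolding norm_bound_def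
      by (intro mult_left_mono) auto
    finally show "norm (((1\<^sub>m n + complex_of_real h \<cdot>\<^sub>m A) ^\<^sub>m k) $$ (i,j)) \<le> c * r^k"
      by (simp add: mult.commute)
  qed
qed



definition ix :: "nat \<Rightarrow> 'n::finite" where "ix = from_nat_into UNIV"
definition idx :: "'n::finite \<Rightarrow> nat" where "idx = inv_into {..<CARD('n)} ix"

lemma bij_ix: "bij_betw (ix :: nat \<Rightarrow> 'n::finite) {..<CARD('n)} UNIV"
  unfolding ix_def using bij_betw_from_nat_into_finite[of "UNIV::'n set"] by simp

lemma ix_idx[simp]: "ix (idx a) = (a::'n::finite)"
  unfolding idx_def using bij_betw_inv_into_right[OF bij_ix] by auto

lemma idx_lt[simp]: "idx (a::'n::finite) < CARD('n)"
proof -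
  have "inv_into {..<CARD('n)} (ix::nat \<Rightarrow> 'n) a \<in> {..<CARD('n)}"
    using bij_ix[where 'n='n] by (intro inv_into_into) (auto simp: bij_betw_def)
  thus ?thesis unfolding idx_def by auto
qed

lemma idx_ix[simp]: "i < CARD('n) \<Longrightarrow> idx (ix i :: 'n::finite) = i"
  unfolding idx_def using bij_betw_inv_into_left[OF bij_ix] by auto

lemma ix_inj: "i < CARD('n) \<Longrightarrow> j < CARD('n) \<Longrightarrow> (ix i :: 'n::finite) = ix j \<longleftrightarrow> i = j"
  by (metis idx_ix)

lemma sum_ix: "(\<Sum>a\<in>UNIV. f a) = (\<Sum>i<CARD('n). f (ix i :: 'n::finite))"
  using sum.reindex_bij_betw[OF bij_ix, of f] by simp

definition toJ :: "real^'n^'n \<Rightarrow> complex mat" where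
  "toJ A = Matrix.mat CARD('n) CARD('n) (\<lambda>(i,j). complex_of_real (A $ ix i $ ix j))"

fun mpow :: "real^'n^'n \<Rightarrow> nat \<Rightarrow> real^'n^'n" where
  "mpow A 0 = Finite_Cartesian_Product.mat 1"
| "mpow A (Suc k) = mpow A k ** A"

lemma toJ_carrier: "toJ (A::real^'n^'n) \<in> carrier_mat CARD('n) CARD('n)"
  unfolding toJ_def by auto

lemma toJ_pow:
  fixes A :: "real^'n^'n"
  assumes "i < CARD('n)" "j < CARD('n)"
  shows "(toJ A ^\<^sub>m k) $$ (i,j) = complex_of_real (mpow A k $ ix i $ ix j)"
  using assms
proof (induction k arbitrary: i j)
  case 0
  thus ?case using ix_inj[OF 0]
    by (simp add: toJ_def Finite_Cartesian_Product.mat_def)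
next
  case (Suc k)
  have "(toJ A ^\<^sub>m Suc k) $$ (i,j) = (\<Sum>l\<in>{0..<CARD('n)}. (toJ A ^\<^sub>m k) $$ (i,l) * toJ A $$ (l,j))"
    using Suc.prems toJ_carrier[of A] by (simp add: scalar_prod_def)
  also have "\<dots> = (\<Sum>l<CARD('n). complex_of_real (mpow A k $ ix i $ ix l * A $ ix l $ ix j))"
    using Suc by (intro sum.cong) (auto simp: toJ_def)
  also have "\<dots> = complex_of_real (\<Sum>l<CARD('n). mpow A k $ ix i $ ix l * A $ ix l $ ix j)"
    by simp
  also have "(\<Sum>l<CARD('n). mpow A k $ ix i $ ix l * A $ ix l $ ix j)
      = (\<Sum>b\<in>UNIV. mpow A k $ ix i $ b * A $ b $ ix j)"
    by (rule sum_ix[symmetric])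
  also have "complex_of_real \<dots> = complex_of_real (mpow A (Suc k) $ ix i $ ix j)"
    by (simp add: matrix_matrix_mult_def)
  finally show ?case .
qed

lemma hurwitz_toJ:
  fixes M :: "real^'n^'n"
  assumes H: "hurwitz M" and e: "eigenvalue (toJ M) mu"
  shows "Re mu < 0"
proof -
  let ?n = "CARD('n)"
  obtain v where v: "v \<in> carrier_vec ?n" "v \<noteq> 0\<^sub>v ?n" "toJ M *\<^sub>v v = mu \<cdot>\<^sub>v v"
    using e toJ_carrier[of M] unfolding eigenvalue_def eigenvector_def by auto
  define w :: "complex^'n" where "w = (\<chi> a. vec_index v (idx a))"
  obtain i where i: "i < ?n" "vec_index v i \<noteq> 0"
  proof -
    have "\<not> (\<forall>i<?n. vec_index v i = 0)"
    proof
      assume "\<forall>i<?n. vec_index v i = 0"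
      hence "v = 0\<^sub>v ?n" using v by (intro eq_vecI) auto
      thus False using v by auto
    qed
    thus ?thesis using that by auto
  qed
  have "w $ ix i \<noteq> 0" using i by (simp add: w_def)
  hence w0: "w \<noteq> 0" by auto
  have "(\<chi> a b. complex_of_real (M $ a $ b)) *v w = mu *s w"
  proof (subst Finite_Cartesian_Product.vec_eq_iff, intro allI)
    fix a :: 'n
    have "((\<chi> a b. complex_of_real (M $ a $ b)) *v w) $ a
        = (\<Sum>l<?n. complex_of_real (M $ a $ ix l) * vec_index v l)"
      by (simp add: matrix_vector_mult_def sum_ix w_def)
    also have "\<dots> = vec_index (toJ M *\<^sub>v v) (idx a)"
      using v(1) by (simp add: toJ_def scalar_prod_def atLeast0LessThan)
    also have "\<dots> = mu * w $ a" using v by (simp add: w_def)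
    finally show "((\<chi> a b. complex_of_real (M $ a $ b)) *v w) $ a = (mu *s w) $ a" by simp
  qed
  thus ?thesis using H w0 unfolding hurwitz_def by blast
qed

lemma hurwitz_pow:
  fixes M :: "real^'n^'n"
  assumes H: "hurwitz M"
  shows "\<exists>h>0. \<exists>r c. 0 < r \<and> r < 1 \<and>
     (\<forall>k a b. \<bar>mpow (Finite_Cartesian_Product.mat 1 + h *\<^sub>R M) k $ a $ b\<bar> \<le> c * r^k)"
proof -
  let ?n = "CARD('n)"
  obtain h r c where h: "h > 0" "0 < r" "r < 1" and
    b: "\<And>k i j. i < ?n \<Longrightarrow> j < ?n \<Longrightarrow>
        norm (((1\<^sub>m ?n + complex_of_real h \<cdot>\<^sub>m toJ M) ^\<^sub>m k) $$ (i,j)) \<le> c * r^k"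
    using jnf_decay[OF toJ_carrier[of M] zero_less_card_finite hurwitz_toJ[OF H]] by blast
  have eq: "toJ (Finite_Cartesian_Product.mat 1 + h *\<^sub>R M) = 1\<^sub>m ?n + complex_of_real h \<cdot>\<^sub>m toJ M"
    by (rule eq_matI) (auto simp: toJ_def Finite_Cartesian_Product.mat_def ix_inj)
  show ?thesis
  proof (intro exI conjI allI)
    fix k a b
    have "\<bar>mpow (Finite_Cartesian_Product.mat 1 + h *\<^sub>R M) k $ a $ b\<bar>
        = norm ((toJ (Finite_Cartesian_Product.mat 1 + h *\<^sub>R M) ^\<^sub>m k) $$ (idx a, idx b))"
      by (subst toJ_pow) auto
    also have "\<dots> \<le> c * r^k" unfolding eq by (rule b) auto
    finally show "\<bar>mpow (Finite_Cartesian_Product.mat 1 + h *\<^sub>R M) k $ a $ b\<bar> \<le> c * r^k" .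
  qed (use h in auto)
qed



lemma norm_mat_le: "norm (X::real^'n^'n) \<le> (\<Sum>a\<in>UNIV. \<Sum>b\<in>UNIV. \<bar>X $ a $ b\<bar>)"
proof -
  have "norm X \<le> (\<Sum>a\<in>UNIV. norm (X $ a))"
    unfolding norm_vec_def by (rule L2_set_le_sum) simp
  also have "\<dots> \<le> (\<Sum>a\<in>UNIV. \<Sum>b\<in>UNIV. \<bar>X $ a $ b\<bar>)"
    by (intro sum_mono norm_le_l1_cart)
  finally show ?thesis .
qed

lemma bl_quad: "bounded_linear (\<lambda>A::real^'n^'n. u \<bullet> (A *v v))"
proof -
  have "linear (\<lambda>A::real^'n^'n. u \<bullet> (A *v v))"
    by (rule linearI)
       (simp_all add: matrix_vector_mult_add_rdistrib inner_add_right
         scaleR_matrix_vector_assoc[symmetric])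
  thus ?thesis by (simp add: linear_conv_bounded_linear)
qed

lemma quad_term: fixes Y :: "real^'n^'n" shows "u \<bullet> ((Finite_Cartesian_Product.transpose Y ** Y) *v v) = (Y *v u) \<bullet> (Y *v v)"
proof -
  have "(Finite_Cartesian_Product.transpose Y ** Y) *v v = (Y *v v) v* Y"
    unfolding matrix_vector_mul_assoc[symmetric] by (rule Finite_Cartesian_Product.transpose_matrix_vector)
  hence "u \<bullet> ((Finite_Cartesian_Product.transpose Y ** Y) *v v) = ((Y *v v) v* Y) \<bullet> u"
    by (simp add: inner_commute)
  also have "\<dots> = (Y *v v) \<bullet> (Y *v u)" by (rule dot_lmul_matrix)
  finally show ?thesis by (simp add: inner_commute)
qed

lemma lyap:
  fixes M :: "real^'n^'n"
  assumes H: "hurwitz M"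
  shows "\<exists>P K \<beta>. K \<ge> 1 \<and> \<beta> > 0 \<and> (\<forall>u v. u \<bullet> (P *v v) = v \<bullet> (P *v u)) \<and>
    (\<forall>x. norm x ^ 2 \<le> x \<bullet> (P *v x) \<and> x \<bullet> (P *v x) \<le> K * norm x ^ 2) \<and>
    (\<forall>x. 2 * (x \<bullet> (P *v (M *v x))) \<le> - \<beta> * (x \<bullet> (P *v x)))"
proof -
  obtain h r c where h: "h > 0" "0 < r" "r < 1" and
    bnd: "\<And>k a b. \<bar>mpow (Finite_Cartesian_Product.mat 1 + h *\<^sub>R M) k $ a $ b\<bar> \<le> c * r^k"
    using hurwitz_pow[OF H] by blast
  define B where "B = Finite_Cartesian_Product.mat 1 + h *\<^sub>R M"
  define Y where "Y = mpow B"
  define T where "T = (\<lambda>k. Finite_Cartesian_Product.transpose (Y k) ** Y k)"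
  have c0: "c \<ge> 0"
  proof -
    have "0 \<le> c * r^0" using bnd[of 0] by (meson abs_ge_zero order_trans)
    thus ?thesis by simp
  qed
  let ?N = "real CARD('n)"
  have entT: "\<bar>T k $ a $ b\<bar> \<le> ?N * c^2 * (r^2)^k" for k a b
  proof -
    have "\<bar>T k $ a $ b\<bar> = \<bar>\<Sum>l\<in>UNIV. Y k $ l $ a * Y k $ l $ b\<bar>"
      by (simp add: T_def matrix_matrix_mult_def transpose_def)
    also have "\<dots> \<le> (\<Sum>l\<in>UNIV. \<bar>Y k $ l $ a\<bar> * \<bar>Y k $ l $ b\<bar>)"
      by (rule order_trans[OF sum_abs]) (simp add: abs_mult)
    also have "\<dots> \<le> (\<Sum>l\<in>(UNIV::'n set). (c * r^k) * (c * r^k))"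
      using bnd c0 h unfolding Y_def B_def by (intro sum_mono mult_mono) auto
    also have "\<dots> = ?N * c^2 * (r^2)^k"
      by (simp add: power2_eq_square power_mult_distrib power_mult[symmetric] mult.commute mult.left_commute)
    finally show ?thesis .
  qed
  have sumT: "summable T"
  proof (rule summable_comparison_test')
    show "summable (\<lambda>k. ?N * ?N * (?N * c^2) * (r^2)^k)"
    proof (intro summable_mult summable_geometric)
      have "r * r < 1 * 1" using h by (intro mult_strict_mono) auto
      thus "norm (r^2) < 1" using h by (simp add: power2_eq_square)
    qed
    fix k :: nat
    have "norm (T k) \<le> (\<Sum>a\<in>(UNIV::'n set). \<Sum>b\<in>(UNIV::'n set). ?N * c^2 * (r^2)^k)"
      using norm_mat_le[of "T k"] entT by (meson order_trans sum_mono)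
    thus "norm (T k) \<le> ?N * ?N * (?N * c^2) * (r^2)^k" by (simp add: mult.assoc)
  qed
  define P where "P = suminf T"
  have Pser: "u \<bullet> (P *v v) = (\<Sum>k. (Y k *v u) \<bullet> (Y k *v v))"
    and Psum: "summable (\<lambda>k. (Y k *v u) \<bullet> (Y k *v v))" for u v
  proof -
    have "u \<bullet> (P *v v) = (\<Sum>k. u \<bullet> (T k *v v))"
      unfolding P_def by (rule bounded_linear.suminf[OF bl_quad sumT])
    thus "u \<bullet> (P *v v) = (\<Sum>k. (Y k *v u) \<bullet> (Y k *v v))"
      unfolding T_def quad_term .
    show "summable (\<lambda>k. (Y k *v u) \<bullet> (Y k *v v))"
      using bounded_linear.summable[OF bl_quad[of u v] sumT] unfolding T_def quad_term .
  qed
  have sym: "u \<bullet> (P *v v) = v \<bullet> (P *v u)" for u v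
    unfolding Pser by (simp add: inner_commute)
  have split: "x \<bullet> (P *v x) = norm x ^ 2 + (\<Sum>k. (Y (Suc k) *v x) \<bullet> (Y (Suc k) *v x))" for x
    using suminf_split_head[OF Psum[of x x]] unfolding Pser
    by (simp add: Y_def power2_norm_eq_inner)
  have nonneg: "0 \<le> (\<Sum>k. (Y (Suc k) *v x) \<bullet> (Y (Suc k) *v x))" for x
    using Psum[of x x] by (intro suminf_nonneg summable_Suc_iff[THEN iffD2]) auto
  have lower: "norm x ^ 2 \<le> x \<bullet> (P *v x)" for x
    using split[of x] nonneg[of x] by linarith
  have Ppos: "0 \<le> x \<bullet> (P *v x)" for x
    using lower[of x] by (meson order_trans zero_le_power2)
  have shift: "(B *v x) \<bullet> (P *v (B *v x)) = x \<bullet> (P *v x) - (norm x ^ 2)" for x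
  proof -
    have "Y k *v (B *v x) = Y (Suc k) *v x" for k
      by (simp add: Y_def matrix_vector_mul_assoc)
    thus ?thesis using split[of x] unfolding Pser by simp
  qed
  obtain KP where KP: "KP > 0" "\<And>x. norm (P *v x) \<le> norm x * KP"
    using bounded_linear.pos_bounded[OF matrix_vector_mul_bounded_linear[of P]] by blast
  define K where "K = max 1 KP"
  have upper: "x \<bullet> (P *v x) \<le> K * norm x ^ 2" for x
  proof -
    have "x \<bullet> (P *v x) \<le> norm x * norm (P *v x)" by (rule norm_cauchy_schwarz)
    also have "\<dots> \<le> norm x * (norm x * K)"
    proof (intro mult_left_mono)
      show "norm (P *v x) \<le> norm x * K"
        using KP(2)[of x] mult_left_mono[OF max.cobounded2[of KP 1] norm_ge_zero[of x]]
        unfolding K_def by (simp add: max.commute)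
    qed simp
    finally show ?thesis by (simp add: power2_eq_square mult.commute mult.left_commute)
  qed
  define \<beta> where "\<beta> = 1 / (h * K)"
  have K1: "K \<ge> 1" unfolding K_def by simp
  have Mx: "2 * (x \<bullet> (P *v (M *v x))) \<le> - \<beta> * (x \<bullet> (P *v x))" for x
  proof -
    let ?m = "M *v x"
    have Bx: "B *v x = x + h *\<^sub>R ?m"
      by (simp add: B_def matrix_vector_mult_add_rdistrib scaleR_matrix_vector_assoc[symmetric])
    have "(B *v x) \<bullet> (P *v (B *v x)) = x \<bullet> (P *v x) + 2 * h * (x \<bullet> (P *v ?m)) + h^2 * (?m \<bullet> (P *v ?m))"
      unfolding Bx using sym[of ?m x]
      by (simp add: matrix_vector_right_distrib matrix_vector_mult_scaleR inner_add_left inner_add_right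
          power2_eq_square algebra_simps)
    hence "2 * h * (x \<bullet> (P *v ?m)) = - (norm x ^ 2) - h^2 * (?m \<bullet> (P *v ?m))"
      using shift[of x] by linarith
    moreover have "0 \<le> h^2 * (?m \<bullet> (P *v ?m))" using Ppos[of ?m] by simp
    ultimately have "h * (2 * (x \<bullet> (P *v ?m))) \<le> - (norm x ^ 2)" by linarith
    also have "- (norm x ^ 2) \<le> - (x \<bullet> (P *v x)) / K"
      using upper[of x] K1 by (simp add: field_simps)
    finally have "h * (2 * (x \<bullet> (P *v ?m))) \<le> h * (- \<beta> * (x \<bullet> (P *v x)))"
      using h K1 by (simp add: \<beta>_def field_simps)
    thus ?thesis using h mult_le_cancel_left_pos[of h] by (metis mult_minus_left)
  qed
  show ?thesis
    by (intro exI[of _ P] exI[of _ K] exI[of _ \<beta>])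
       (use K1 h sym lower upper Mx in \<open>auto simp: \<beta>_def\<close>)
qed



lemma mode_decay:
  fixes M P :: "real^'n^'n" and x :: "real \<Rightarrow> real^'n"
  assumes sym: "\<forall>u v. u \<bullet> (P *v v) = v \<bullet> (P *v u)"
    and Mx: "\<forall>y. 2 * (y \<bullet> (P *v (M *v y))) \<le> - \<beta> * (y \<bullet> (P *v y))"
    and g: "g \<ge> 0" and st: "s \<le> t"
    and cont: "continuous_on {s..t} x"
    and der: "\<And>\<tau>. s < \<tau> \<Longrightarrow> \<tau> < t \<Longrightarrow> (x has_vector_derivative (g *\<^sub>R (M *v x \<tau>))) (at \<tau>)"
  shows "x t \<bullet> (P *v x t) \<le> exp (- (g*\<beta>) * (t - s)) * (x s \<bullet> (P *v x s))"
proof -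
  define V where "V \<tau> = x \<tau> \<bullet> (P *v x \<tau>)" for \<tau>
  define W where "W \<tau> = exp (g*\<beta>*\<tau>) * V \<tau>" for \<tau>
  have dV: "(V has_real_derivative (2 * g * (x \<tau> \<bullet> (P *v (M *v x \<tau>))))) (at \<tau>)"
    if "s < \<tau>" "\<tau> < t" for \<tau>
  proof -
    let ?d = "g *\<^sub>R (M *v x \<tau>)"
    have dx: "(x has_derivative (\<lambda>h. h *\<^sub>R ?d)) (at \<tau>)"
      using der[OF that] by (simp add: has_vector_derivative_def)
    have dPx: "((\<lambda>\<tau>. P *v x \<tau>) has_derivative (\<lambda>h. P *v (h *\<^sub>R ?d))) (at \<tau>)"
      by (rule bounded_linear.has_derivative[OF matrix_vector_mul_bounded_linear dx])
    have "(V has_derivative (\<lambda>h. x \<tau> \<bullet> (P *v (h *\<^sub>R ?d)) + (h *\<^sub>R ?d) \<bullet> (P *v x \<tau>))) (at \<tau>)"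
      unfolding V_def by (rule has_derivative_inner[OF dx dPx])
    moreover have "(\<lambda>h. x \<tau> \<bullet> (P *v (h *\<^sub>R ?d)) + (h *\<^sub>R ?d) \<bullet> (P *v x \<tau>))
        = (\<lambda>h. (2 * g * (x \<tau> \<bullet> (P *v (M *v x \<tau>)))) * h)"
    proof
      fix h
      have "(M *v x \<tau>) \<bullet> (P *v x \<tau>) = x \<tau> \<bullet> (P *v (M *v x \<tau>))" using sym by auto
      thus "x \<tau> \<bullet> (P *v (h *\<^sub>R ?d)) + (h *\<^sub>R ?d) \<bullet> (P *v x \<tau>)
          = (2 * g * (x \<tau> \<bullet> (P *v (M *v x \<tau>)))) * h"
        by (simp add: matrix_vector_mult_scaleR algebra_simps)
    qed
    ultimately show ?thesis by (simp add: has_field_derivative_def)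
  qed
  have "W t \<le> W s"
  proof (rule DERIV_nonpos_imp_decreasing_open[OF st])
    fix \<tau> assume a: "s < \<tau>" "\<tau> < t"
    have "(W has_real_derivative
        (exp (g*\<beta>*\<tau>) * (g*\<beta>) * V \<tau> + exp (g*\<beta>*\<tau>) * (2 * g * (x \<tau> \<bullet> (P *v (M *v x \<tau>)))))) (at \<tau>)"
      unfolding W_def
      by (auto intro!: derivative_eq_intros dV[OF a] simp: algebra_simps)
    moreover have "exp (g*\<beta>*\<tau>) * (g*\<beta>) * V \<tau> + exp (g*\<beta>*\<tau>) * (2 * g * (x \<tau> \<bullet> (P *v (M *v x \<tau>)))) \<le> 0"
    proof -
      have "g * (2 * (x \<tau> \<bullet> (P *v (M *v x \<tau>)))) \<le> g * (- \<beta> * V \<tau>)"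
        using Mx g unfolding V_def by (intro mult_left_mono) auto
      hence "(g*\<beta>) * V \<tau> + 2 * g * (x \<tau> \<bullet> (P *v (M *v x \<tau>))) \<le> 0" by (simp add: algebra_simps)
      hence "exp (g*\<beta>*\<tau>) * ((g*\<beta>) * V \<tau> + 2 * g * (x \<tau> \<bullet> (P *v (M *v x \<tau>)))) \<le> 0"
        by (simp add: mult_nonneg_nonpos)
      thus ?thesis by (simp add: algebra_simps)
    qed
    ultimately show "\<exists>y. (W has_real_derivative y) (at \<tau>) \<and> y \<le> 0" by blast
  next
    have "continuous_on {s..t} (\<lambda>\<tau>. P *v x \<tau>)"
      by (rule bounded_linear.continuous_on[OF matrix_vector_mul_bounded_linear cont])
    thus "continuous_on {s..t} W" unfolding W_def V_def
      using cont by (intro continuous_intros) auto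
  qed
  hence "exp (g*\<beta>*t) * V t \<le> exp (g*\<beta>* s) * V s" unfolding W_def .
  hence "exp (- (g*\<beta>*t)) * (exp (g*\<beta>*t) * V t) \<le> exp (- (g*\<beta>*t)) * (exp (g*\<beta>* s) * V s)"
    by (intro mult_left_mono) auto
  hence "V t \<le> exp (- (g*\<beta>*t)) * exp (g*\<beta>* s) * V s"
    by (simp add: mult.assoc exp_minus field_simps)
  also have "exp (- (g*\<beta>*t)) * exp (g*\<beta>* s) = exp (- (g*\<beta>) * (t - s))"
    by (simp add: exp_add[symmetric] algebra_simps)
  finally show ?thesis unfolding V_def .
qed

lemma sigma_const:
  assumes st: "s < t" and s0: "0 \<le> s" and nd: "disc_points \<sigma> \<inter> {s<..<t} = {}"
  shows "\<exists>i. \<forall>\<tau>\<in>{s<..<t}. \<sigma> \<tau> = i"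
proof -
  define f where "f \<tau> = real (\<sigma> \<tau>)" for \<tau>
  have ca: "continuous (at \<tau>) f" if "\<tau> \<in> {s<..<t}" for \<tau>
  proof -
    have "\<tau> \<notin> disc_points \<sigma>" using nd that by auto
    moreover have "\<tau> > 0" using that s0 by auto
    ultimately have "continuous (at \<tau>) \<sigma>" unfolding disc_points_def by auto
    moreover have "continuous (at (\<sigma> \<tau>)) (real :: nat \<Rightarrow> real)" by (rule continuous_discrete)
    ultimately have "continuous (at \<tau>) (real \<circ> \<sigma>)" by (rule continuous_at_compose)
    thus ?thesis unfolding f_def o_def .
  qed
  have "f constant_on {s<..<t}"
  proof (rule continuous_discrete_range_constant)
    show "connected {s<..<t}" by simp
    show "continuous_on {s<..<t} f" using ca by (intro continuous_at_imp_continuous_on) auto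
    fix x assume "x \<in> {s<..<t}"
    show "\<exists>e>0. \<forall>y. y \<in> {s<..<t} \<and> f y \<noteq> f x \<longrightarrow> e \<le> norm (f y - f x)"
    proof (intro exI[of _ 1] conjI allI impI)
      fix y assume "y \<in> {s<..<t} \<and> f y \<noteq> f x"
      hence "\<sigma> y \<noteq> \<sigma> x" unfolding f_def by auto
      thus "1 \<le> norm (f y - f x)" unfolding f_def by (cases "\<sigma> y < \<sigma> x") auto
    qed simp
  qed
  then obtain c where c: "\<forall>\<tau>\<in>{s<..<t}. f \<tau> = c" unfolding constant_on_def by auto
  show ?thesis
  proof (intro exI[of _ "nat \<lfloor>c\<rfloor>"] ballI)
    fix \<tau> assume "\<tau> \<in> {s<..<t}"
    hence "real (\<sigma> \<tau>) = c" using c f_def by auto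
    thus "\<sigma> \<tau> = nat \<lfloor>c\<rfloor>" by (metis floor_of_nat nat_int)
  qed
qed



lemma chain_aux:
  fixes x :: "real \<Rightarrow> real^'n" and D :: "real set"
  assumes K1: "K \<ge> 1"
    and fin: "\<And>T. finite (D \<inter> {0..T})"
    and H: "\<And>s t. 0 \<le> s \<Longrightarrow> s < t \<Longrightarrow> D \<inter> {s<..<t} = {} \<Longrightarrow>
              norm (x t)^2 \<le> K * exp (-\<gamma>*(t-s)) * norm (x s)^2"
  shows "\<forall>s. 0 \<le> s \<longrightarrow> s \<le> t \<longrightarrow> card (D \<inter> {s<..<t}) = n \<longrightarrow>
           norm (x t)^2 \<le> K^(n + 1) * exp (-\<gamma>*(t-s)) * norm (x s)^2"
proof (induction n)
  case 0
  show ?case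
  proof (intro allI impI)
    fix s assume s: "0 \<le> s" "s \<le> t" "card (D \<inter> {s<..<t}) = 0"
    have finE: "finite (D \<inter> {s<..<t})" by (rule finite_subset[OF _ fin[of t]]) (use s in auto)
    show "norm (x t)^2 \<le> K^(0 + 1) * exp (-\<gamma>*(t-s)) * norm (x s)^2"
    proof (cases "s = t")
      case True
      have "norm (x t)^2 \<le> K * norm (x t)^2" using K1 by (simp add: mult_le_cancel_right1)
      thus ?thesis using True by simp
    next
      case False
      hence "s < t" using s by auto
      moreover have "D \<inter> {s<..<t} = {}" using s(3) finE by simp
      ultimately show ?thesis using H s by simp
    qed
  qed
next
  case (Suc n)
  show ?case
  proof (intro allI impI)
    fix s assume s: "0 \<le> s" "s \<le> t" "card (D \<inter> {s<..<t}) = Suc n"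
    define E where "E = D \<inter> {s<..<t}"
    have finE: "finite E" unfolding E_def by (rule finite_subset[OF _ fin[of t]]) (use s in auto)
    have ne: "E \<noteq> {}" using s(3) unfolding E_def by auto
    define d where "d = Min E"
    have dE: "d \<in> E" unfolding d_def using finE ne by simp
    hence sd: "s < d" "d < t" unfolding E_def by auto
    have empty: "D \<inter> {s<..<d} = {}"
    proof (rule ccontr)
      assume "D \<inter> {s<..<d} \<noteq> {}"
      then obtain e where "e \<in> D" "s < e" "e < d" by auto
      hence "e \<in> E" unfolding E_def using sd by auto
      hence "d \<le> e" unfolding d_def using finE by simp
      thus False using \<open>e < d\<close> by simp
    qed
    have "D \<inter> {d<..<t} = E - {d}"
    proof
      show "D \<inter> {d<..<t} \<subseteq> E - {d}" unfolding E_def using sd by auto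
      show "E - {d} \<subseteq> D \<inter> {d<..<t}"
      proof
        fix e assume e: "e \<in> E - {d}"
        hence "d \<le> e" unfolding d_def using finE by simp
        thus "e \<in> D \<inter> {d<..<t}" using e unfolding E_def by auto
      qed
    qed
    hence cd: "card (D \<inter> {d<..<t}) = n" using s(3) dE finE unfolding E_def by simp
    have IH: "norm (x t)^2 \<le> K^(n + 1) * exp (-\<gamma>*(t-d)) * norm (x d)^2"
      using Suc.IH sd s cd by auto
    have Hd: "norm (x d)^2 \<le> K * exp (-\<gamma>*(d-s)) * norm (x s)^2"
      using H[OF s(1) sd(1) empty] .
    have "norm (x t)^2 \<le> K^(n + 1) * exp (-\<gamma>*(t-d)) * (K * exp (-\<gamma>*(d-s)) * norm (x s)^2)"
      using IH Hd K1 by (meson order_trans mult_left_mono exp_ge_zero mult_nonneg_nonneg zero_le_power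
          order.trans zero_le_one)
    also have "\<dots> = K^(Suc n + 1) * (exp (-\<gamma>*(t-d)) * exp (-\<gamma>*(d-s))) * norm (x s)^2"
      by (simp add: algebra_simps)
    also have "exp (-\<gamma>*(t-d)) * exp (-\<gamma>*(d-s)) = exp (-\<gamma>*(t-s))"
      by (simp add: exp_add[symmetric] algebra_simps)
    finally show "norm (x t)^2 \<le> K^(Suc n + 1) * exp (-\<gamma>*(t-s)) * norm (x s)^2" .
  qed
qed



definition lyap_ok :: "real^'n^'n \<Rightarrow> real^'n^'n \<Rightarrow> real \<Rightarrow> real \<Rightarrow> bool" where
  "lyap_ok M P K \<beta> \<longleftrightarrow> K \<ge> 1 \<and> \<beta> > 0 \<and> (\<forall>u v. u \<bullet> (P *v v) = v \<bullet> (P *v u)) \<and>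
    (\<forall>x. norm x ^ 2 \<le> x \<bullet> (P *v x) \<and> x \<bullet> (P *v x) \<le> K * norm x ^ 2) \<and>
    (\<forall>x. 2 * (x \<bullet> (P *v (M *v x))) \<le> - \<beta> * (x \<bullet> (P *v x)))"

lemma mode_bound:
  fixes M P :: "real^'n^'n" and x :: "real \<Rightarrow> real^'n"
  assumes L: "lyap_ok M P K \<beta>" and g: "g \<ge> 0" and st: "s \<le> t"
    and cont: "continuous_on {s..t} x"
    and der: "\<And>\<tau>. s < \<tau> \<Longrightarrow> \<tau> < t \<Longrightarrow> (x has_vector_derivative (g *\<^sub>R (M *v x \<tau>))) (at \<tau>)"
  shows "norm (x t)^2 \<le> K * exp (- (g*\<beta>) * (t - s)) * norm (x s)^2"
proof -
  have "norm (x t)^2 \<le> x t \<bullet> (P *v x t)" using L unfolding lyap_ok_def by auto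
  also have "\<dots> \<le> exp (- (g*\<beta>) * (t - s)) * (x s \<bullet> (P *v x s))"
    using L g st cont der unfolding lyap_ok_def by (intro mode_decay) auto
  also have "\<dots> \<le> exp (- (g*\<beta>) * (t - s)) * (K * norm (x s)^2)"
    using L unfolding lyap_ok_def by (intro mult_left_mono) auto
  finally show ?thesis by (simp add: algebra_simps)
qed

theorem lemma3:
  fixes M :: "nat \<Rightarrow> real^'n^'n" and p :: nat and tauD N0 lam :: real
  assumes "\<forall>i\<in>{1..p}. hurwitz (M i)"
    and "tauD > 0" and "N0 > 0" and "lam > 0"
  shows "\<exists>g0>0. \<forall>g\<ge>g0. \<exists>c>0. \<forall>\<sigma> x.
           \<sigma> \<in> S_ave {1..p} tauD N0 \<and> switched_solution g M \<sigma> x \<longrightarrow>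
           (\<forall>t\<ge>0. norm (x t) \<le> c * exp (- lam * t) * norm (x 0))"
proof -
  note hur = assms(1) and tau = assms(2) and N0 = assms(3) and lam = assms(4)
  have "\<forall>i\<in>{1..p}. \<exists>z. lyap_ok (M i) (fst z) (fst (snd z)) (snd (snd z))"
  proof
    fix i assume "i \<in> {1..p}"
    from lyap[OF hur[rule_format, OF this]] obtain P K \<beta> where "lyap_ok (M i) P K \<beta>"
      unfolding lyap_ok_def by blast
    thus "\<exists>z. lyap_ok (M i) (fst z) (fst (snd z)) (snd (snd z))" by (intro exI[of _ "(P,K,\<beta>)"]) simp
  qed
  then obtain f where f: "\<forall>i\<in>{1..p}. lyap_ok (M i) (fst (f i)) (fst (snd (f i))) (snd (snd (f i)))"
    by (metis bchoice)
  define Kf where "Kf i = fst (snd (f i))" for i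
  define bf where "bf i = snd (snd (f i))" for i
  define Kmax where "Kmax = Max (insert 1 (Kf ` {1..p}))"
  define bmin where "bmin = Min (insert 1 (bf ` {1..p}))"
  have Kmax1: "Kmax \<ge> 1" unfolding Kmax_def by simp
  have KfK: "Kf i \<le> Kmax" if "i \<in> {1..p}" for i unfolding Kmax_def using that by (intro Max_ge) auto
  have bpos: "bmin > 0"
    unfolding bmin_def using f by (subst Min_gr_iff) (auto simp: bf_def lyap_ok_def)
  have bfb: "bmin \<le> bf i" if "i \<in> {1..p}" for i unfolding bmin_def using that by (intro Min_le) auto
  define L where "L = ln Kmax"
  have L0: "L \<ge> 0" unfolding L_def using Kmax1 by simp
  define g0 where "g0 = (2 * lam + L / tauD) / bmin"
  have "L / tauD \<ge> 0" using L0 tau by simp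
  hence g0pos: "g0 > 0" unfolding g0_def using lam bpos by (intro divide_pos_pos) auto
  show ?thesis
  proof (rule exI[of _ g0], intro conjI allI impI)
    show "g0 > 0" by fact
    fix g :: real assume gg0: "g \<ge> g0"
    hence g0': "g \<ge> 0" using g0pos by simp
    define c where "c = exp (L * (N0 + 1) / 2)"
    show "\<exists>c>0. \<forall>\<sigma> x. \<sigma> \<in> S_ave {1..p} tauD N0 \<and> switched_solution g M \<sigma> x \<longrightarrow>
           (\<forall>t\<ge>0. norm (x t) \<le> c * exp (- lam * t) * norm (x 0))"
    proof (intro exI[of _ c] conjI allI impI)
      show "c > 0" unfolding c_def by simp
      fix \<sigma> x t
      assume a: "\<sigma> \<in> S_ave {1..p} tauD N0 \<and> switched_solution g M \<sigma> x" and t: "0 \<le> (t::real)"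
      have sw: "switching_signal {1..p} \<sigma>" and Nb: "\<forall>t0 t. 0 \<le> t0 \<and> t0 \<le> t \<longrightarrow> real (N_sigma \<sigma> t0 t) \<le> N0 + (t - t0) / tauD"
        using a unfolding S_ave_def by auto
      have xc: "continuous_on {0..} x"
        and xd: "\<And>t. t \<ge> 0 \<Longrightarrow> t \<notin> disc_points \<sigma> \<Longrightarrow>
           (x has_vector_derivative (g *\<^sub>R (M (\<sigma> t) *v x t))) (at t within {0..})"
        using a unfolding switched_solution_def by auto
      define D where "D = disc_points \<sigma>"
      have fin: "finite (D \<inter> {0..T})" for T using sw unfolding switching_signal_def D_def by auto
      have H: "norm (x t)^2 \<le> Kmax * exp (-(g*bmin)*(t-s)) * norm (x s)^2"
        if s: "0 \<le> s" "s < t" "D \<inter> {s<..<t} = {}" for s t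
      proof -
        obtain i where i: "\<forall>\<tau>\<in>{s<..<t}. \<sigma> \<tau> = i"
          using sigma_const[OF s(2) s(1)] s(3) unfolding D_def by blast
        have "\<sigma> ((s+t)/2) = i" using i s by auto
        moreover have "\<sigma> ((s+t)/2) \<in> {1..p}" using sw s unfolding switching_signal_def by auto
        ultimately have ip: "i \<in> {1..p}" by simp
        have Li: "lyap_ok (M i) (fst (f i)) (Kf i) (bf i)" using f ip unfolding Kf_def bf_def by auto
        have "norm (x t)^2 \<le> Kf i * exp (- (g * bf i) * (t - s)) * norm (x s)^2"
        proof (rule mode_bound[OF Li g0'])
          show "s \<le> t" using s by simp
          show "continuous_on {s..t} x" using s by (intro continuous_on_subset[OF xc]) auto
          fix \<tau> assume \<tau>: "s < \<tau>" "\<tau> < t"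
          have "\<tau> \<notin> disc_points \<sigma>" using s(3) \<tau> unfolding D_def by auto
          hence "(x has_vector_derivative (g *\<^sub>R (M (\<sigma> \<tau>) *v x \<tau>))) (at \<tau> within {0..})"
            using xd \<tau> s by auto
          hence "(x has_vector_derivative (g *\<^sub>R (M i *v x \<tau>))) (at \<tau> within {0<..})"
            using i \<tau> by (auto intro: has_vector_derivative_within_subset)
          thus "(x has_vector_derivative (g *\<^sub>R (M i *v x \<tau>))) (at \<tau>)"
            using \<tau> s by (subst (asm) has_vector_derivative_within_open) auto
        qed
        also have "\<dots> \<le> Kmax * exp (-(g*bmin)*(t-s)) * norm (x s)^2"
        proof (intro mult_right_mono mult_mono)
          show "Kf i \<le> Kmax" using KfK[OF ip] .
          show "exp (- (g * bf i) * (t - s)) \<le> exp (-(g*bmin)*(t-s))"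
            using bfb[OF ip] g0' s by (auto intro!: mult_right_mono mult_left_mono)
          show "0 \<le> Kmax" using Kmax1 by simp
        qed auto
        finally show ?thesis .
      qed
      have ch0: "\<forall>s. 0 \<le> s \<longrightarrow> s \<le> t \<longrightarrow> card (D \<inter> {s<..<t}) = card (D \<inter> {0<..<t}) \<longrightarrow>
           norm (x t)^2 \<le> Kmax^(card (D \<inter> {0<..<t}) + 1) * exp (-(g*bmin)*(t-s)) * norm (x s)^2"
      proof (rule chain_aux[OF Kmax1 fin])
        fix s t' :: real assume "0 \<le> s" "s < t'" "D \<inter> {s<..<t'} = {}"
        thus "norm (x t')^2 \<le> Kmax * exp (-(g*bmin)*(t'-s)) * norm (x s)^2" by (rule H)
      qed
      have ch: "norm (x t)^2 \<le> Kmax^(card (D \<inter> {0<..<t}) + 1) * exp (-(g*bmin)*(t-0)) * norm (x 0)^2"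
        using ch0 t by blast
      define N where "N = card (D \<inter> {0<..<t})"
      have NN: "real N \<le> N0 + t / tauD"
        using Nb[rule_format, of 0 t] t unfolding N_def D_def N_sigma_def by auto
      have "Kmax^(N + 1) = exp (L * real (N + 1))"
      proof -
        have "exp L = Kmax" unfolding L_def using Kmax1 by simp
        moreover have "exp (L * real (N + 1)) = exp L ^ (N + 1)"
          by (metis exp_of_nat_mult mult.commute)
        ultimately show ?thesis by simp
      qed
      also have "\<dots> \<le> exp (L * (N0 + 1 + t / tauD))"
        using NN L0 by (auto intro!: mult_left_mono)
      finally have KN: "Kmax^(N + 1) \<le> exp (L * (N0 + 1 + t / tauD))" .
      have gb: "g * bmin \<ge> 2 * lam + L / tauD"
      proof -
        have "g * bmin \<ge> g0 * bmin" using gg0 bpos by (intro mult_right_mono) auto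
        thus ?thesis unfolding g0_def using bpos by simp
      qed
      have "norm (x t)^2 \<le> exp (L * (N0 + 1 + t / tauD)) * exp (-(g*bmin)*t) * norm (x 0)^2"
      proof -
        have "Kmax^(N + 1) * exp (-(g*bmin)*(t-0)) * norm (x 0)^2
            \<le> exp (L * (N0 + 1 + t / tauD)) * exp (-(g*bmin)*(t-0)) * norm (x 0)^2"
          using KN by (intro mult_right_mono) auto
        from order_trans[OF ch[unfolded N_def[symmetric]] this] show ?thesis by (simp only: diff_zero)
      qed
      also have "exp (L * (N0 + 1 + t / tauD)) * exp (-(g*bmin)*t) = exp (L * (N0 + 1) + (L / tauD - g*bmin) * t)"
        by (simp add: exp_add[symmetric] algebra_simps)
      also have "\<dots> \<le> exp (L * (N0 + 1) - 2 * lam * t)"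
      proof -
        have "(L / tauD - g*bmin) * t \<le> (- 2 * lam) * t" using gb t by (intro mult_right_mono) auto
        thus ?thesis by simp
      qed
      also have "exp (L * (N0 + 1) - 2 * lam * t) * norm (x 0)^2 = (c * exp (- lam * t) * norm (x 0))^2"
      proof -
        have c2: "c^2 = exp (L * (N0 + 1))" unfolding c_def
          by (simp add: power2_eq_square exp_add[symmetric])
        have e2: "exp (- lam * t)^2 = exp (- 2 * lam * t)"
          by (simp add: power2_eq_square exp_add[symmetric])
        have "(c * exp (- lam * t) * norm (x 0))^2 = c^2 * exp (- lam * t)^2 * norm (x 0)^2"
          by (simp add: power_mult_distrib)
        also have "\<dots> = exp (L * (N0 + 1)) * exp (- 2 * lam * t) * norm (x 0)^2" unfolding c2 e2 ..
        also have "exp (L * (N0 + 1)) * exp (- 2 * lam * t) = exp (L * (N0 + 1) - 2 * lam * t)"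
          by (simp add: exp_add[symmetric])
        finally show ?thesis by simp
      qed
      finally have "norm (x t)^2 \<le> (c * exp (- lam * t) * norm (x 0))^2"
        by (simp add: mult_right_mono)
      thus "norm (x t) \<le> c * exp (- lam * t) * norm (x 0)"
        by (rule power2_le_imp_le) (simp add: c_def)
    qed
  qed
qed

end
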